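(* Let $\mathfrak{g}=\mathfrak{sl}(2,\mathbb{R})$, with basis $(Y_1,Y_2,Y_3)$ satisfying $[Y_1,Y_2]=Y_3$, $[Y_1,Y_3]=Y_2$, $[Y_2,Y_3]=Y_1$, and with basis $(H,X_+,X_-)$ where $H=\begin{pmatrix}1&0\\0&-1\end{pmatrix}$, $X_+=\begin{pmatrix}0&1\\0&0\end{pmatrix}$, $X_-=\begin{pmatrix}0&0\\-1&0\end{pmatrix}$ (so $[H,X_+]=2X_+$, $[H,X_-]=-2X_-$, $[X_+,X_-]=H$, and $Y_1=\frac12 H$, $Y_2=\frac12(X_+-X_-)$, $Y_3=\frac12(X_++X_-)$). Let $J:\mathfrak{g}\to\mathfrak{g}$ be any linear map. Then $J$ has zero torsion if and only if it is equivalent to the endomorphism whose matrix in the basis $(Y_1,Y_2,Y_3)$ is $$J_*(\lambda)=\begin{pmatrix}0&0&-1\\0&\lambda&0\\1&0&0\end{pmatrix}$$ for some $\lambda\in\mathbb{R}$, and $J_*(\lambda)\not\equiv J_*(\mu)$ for $\lambda\neq\mu$. Equivalently, $J$ has zero torsion if and only if it is equivalent to the endomorphism whose matrix in the basis $(H,X_+,X_-)$ is $$J(\alpha)=\begin{pmatrix}0&-\frac12&-\frac12\\1&\alpha&-\alpha\\1&-\alpha&\alpha\end{pmatrix}$$ for some $\alpha\in\mathbb{R}$, and $J(\alpha)\not\equiv J(\beta)$ for $\alpha\neq\beta$.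
   Context: A linear map $J:\mathfrak{g}\to\mathfrak{g}$ on a real Lie algebra has zero torsion if $[JX,JY]-[X,Y]-J[JX,Y]-J[X,JY]=0$ for all $X,Y\in\mathfrak{g}$. Two linear maps $J,J'$ on $\mathfrak{g}$ are equivalent ($J\equiv J'$) if there is a Lie algebra automorphism $\Phi\in\mathrm{Aut}\,\mathfrak{g}$ with $J'=\Phi\circ J\circ\Phi^{-1}$. The matrix of a linear map in a basis $(e_j)$ is $(\xi^i_j)$ with $Je_j=\sum_i\xi^i_j e_i$ (the $j$-th column gives the coordinates of $Je_j$). *)

theory Defs
  imports "HOL-Analysis.Analysis"
begin

text \<open>The Lie algebra sl(2,R) is modelled on real^3, a vector x standing for
  x$1 Y1 + x$2 Y2 + x$3 Y3, where (Y1,Y2,Y3) is the basis with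
  [Y1,Y2] = Y3, [Y1,Y3] = Y2, [Y2,Y3] = Y1.\<close>

definition sl2_bracket :: "real^3 \<Rightarrow> real^3 \<Rightarrow> real^3" where
  "sl2_bracket x y = vector [x$2 * y$3 - x$3 * y$2,
                             x$1 * y$3 - x$3 * y$1,
                             x$1 * y$2 - x$2 * y$1]"

definition Ybasis :: "3 \<Rightarrow> real^3" where
  "Ybasis j = axis j 1"

definition HXbasis :: "3 \<Rightarrow> real^3" where
  "HXbasis j = (if j = 1 then vector [2, 0, 0]
                else if j = 2 then vector [0, 1, 1]
                else vector [0, -1, 1])"

definition zero_torsion :: "(real^3 \<Rightarrow> real^3) \<Rightarrow> bool" where
  "zero_torsion J \<longleftrightarrow> (\<forall>X Y. sl2_bracket (J X) (J Y) - sl2_bracket X Y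
      - J (sl2_bracket (J X) Y) - J (sl2_bracket X (J Y)) = 0)"

definition sl2_aut :: "(real^3 \<Rightarrow> real^3) \<Rightarrow> bool" where
  "sl2_aut \<Phi> \<longleftrightarrow> linear \<Phi> \<and> bij \<Phi> \<and>
     (\<forall>X Y. \<Phi> (sl2_bracket X Y) = sl2_bracket (\<Phi> X) (\<Phi> Y))"

definition sl2_equiv :: "(real^3 \<Rightarrow> real^3) \<Rightarrow> (real^3 \<Rightarrow> real^3) \<Rightarrow> bool" where
  "sl2_equiv J J' \<longleftrightarrow> (\<exists>\<Phi>. sl2_aut \<Phi> \<and> J' = \<Phi> \<circ> J \<circ> inv \<Phi>)"

text \<open>L has matrix M in basis b: L (b j) = sum_i M$i$j b i (column j = coords of L(b j)).\<close>
definition has_matrix_in_basis :: "(real^3 \<Rightarrow> real^3) \<Rightarrow> (3 \<Rightarrow> real^3) \<Rightarrow> real^3^3 \<Rightarrow> bool" where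
  "has_matrix_in_basis L b M \<longleftrightarrow> (\<forall>j. L (b j) = (\<Sum>i\<in>UNIV. M$i$j *\<^sub>R b i))"

definition Jstar :: "real \<Rightarrow> real^3^3" where
  "Jstar l = vector [vector [0, 0, -1], vector [0, l, 0], vector [1, 0, 0]]"

definition Jalpha :: "real \<Rightarrow> real^3^3" where
  "Jalpha a = vector [vector [0, -1/2, -1/2], vector [1, a, -a], vector [1, -a, a]]"

end

theory Submission
  imports Defs
begin


definition Jg :: "real \<Rightarrow> real \<Rightarrow> real \<Rightarrow> real \<Rightarrow> real \<Rightarrow> real \<Rightarrow> real \<Rightarrow> real \<Rightarrow> real \<Rightarrow> real^3 \<Rightarrow> real^3" where
  "Jg g11 g12 g13 g22 g23 g33 a1 a2 a3 x = vector [g11*x$1 + g12*x$2 + g13*x$3 + (a2*x$3 - a3*x$2),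
     -(g12*x$1 + g22*x$2 + g23*x$3) + (a1*x$3 - a3*x$1), g13*x$1 + g23*x$2 + g33*x$3 + (a1*x$2 - a2*x$1)]"

lemma comp0: "v = (0::real^3) \<Longrightarrow> v$1 = 0 \<and> v$2 = 0 \<and> v$3 = 0" by simp

lemma tors_E:
  assumes "zero_torsion (Jg g11 g12 g13 g22 g23 g33 a1 a2 a3)"
  shows "- (2*a1*g12) - 2*a2*g11 - 2*g12*g23 + 2*g13*g22 = 0" "2*a1*g22 + 2*a2*g12 + 2*g11*g23 - 2*g12*g13 = 0" "- (2*a1*g23) - a1^2 - 2*a2*g13 + a2^2 - a3^2 - g11*g22 - g11*g33 + g12^2 + g13^2 + g22*g33 - g23^2 - 1 = 0" "- (2*a1*g13) + 2*a3*g11 - 2*g12*g33 + 2*g13*g23 = 0" "2*a1*g23 - a1^2 + a2^2 - 2*a3*g12 - a3^2 + g11*g22 + g11*g33 - g12^2 - g13^2 + g22*g33 - g23^2 - 1 = 0" "- (2*a1*g33) + 2*a3*g13 - 2*g11*g23 + 2*g12*g13 = 0" "- (a1^2) + 2*a2*g13 + a2^2 + 2*a3*g12 - a3^2 + g11*g22 - g11*g33 - g12^2 + g13^2 - g22*g33 + g23^2 - 1 = 0" "- (2*a2*g23) - 2*a3*g22 + 2*g12*g33 - 2*g13*g23 = 0" "2*a2*g33 + 2*a3*g23 - 2*g12*g23 + 2*g13*g22 = 0"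
proof -
  let ?J = "Jg g11 g12 g13 g22 g23 g33 a1 a2 a3"
  have T: "\<And>X Y. sl2_bracket (?J X) (?J Y) - sl2_bracket X Y - ?J (sl2_bracket (?J X) Y) - ?J (sl2_bracket X (?J Y)) = 0"
    using assms unfolding zero_torsion_def by blast
  have A: "- (2*a1*g12) - 2*a2*g11 - 2*g12*g23 + 2*g13*g22 = 0 \<and> 2*a1*g22 + 2*a2*g12 + 2*g11*g23 - 2*g12*g13 = 0 \<and> - (2*a1*g23) - a1^2 - 2*a2*g13 + a2^2 - a3^2 - g11*g22 - g11*g33 + g12^2 + g13^2 + g22*g33 - g23^2 - 1 = 0"
    using comp0[OF T[of "vector[1,0,0]" "vector[0,1,0]"]] apply (simp add: Jg_def sl2_bracket_def) by algebra
  have B: "- (2*a1*g13) + 2*a3*g11 - 2*g12*g33 + 2*g13*g23 = 0 \<and> 2*a1*g23 - a1^2 + a2^2 - 2*a3*g12 - a3^2 + g11*g22 + g11*g33 - g12^2 - g13^2 + g22*g33 - g23^2 - 1 = 0 \<and> - (2*a1*g33) + 2*a3*g13 - 2*g11*g23 + 2*g12*g13 = 0"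
    using comp0[OF T[of "vector[1,0,0]" "vector[0,0,1]"]] apply (simp add: Jg_def sl2_bracket_def) by algebra
  have C: "- (a1^2) + 2*a2*g13 + a2^2 + 2*a3*g12 - a3^2 + g11*g22 - g11*g33 - g12^2 + g13^2 - g22*g33 + g23^2 - 1 = 0 \<and> - (2*a2*g23) - 2*a3*g22 + 2*g12*g33 - 2*g13*g23 = 0 \<and> 2*a2*g33 + 2*a3*g23 - 2*g12*g23 + 2*g13*g22 = 0"
    using comp0[OF T[of "vector[0,1,0]" "vector[0,0,1]"]] apply (simp add: Jg_def sl2_bracket_def) by algebra
  show "- (2*a1*g12) - 2*a2*g11 - 2*g12*g23 + 2*g13*g22 = 0" "2*a1*g22 + 2*a2*g12 + 2*g11*g23 - 2*g12*g13 = 0" "- (2*a1*g23) - a1^2 - 2*a2*g13 + a2^2 - a3^2 - g11*g22 - g11*g33 + g12^2 + g13^2 + g22*g33 - g23^2 - 1 = 0" "- (2*a1*g13) + 2*a3*g11 - 2*g12*g33 + 2*g13*g23 = 0" "2*a1*g23 - a1^2 + a2^2 - 2*a3*g12 - a3^2 + g11*g22 + g11*g33 - g12^2 - g13^2 + g22*g33 - g23^2 - 1 = 0" "- (2*a1*g33) + 2*a3*g13 - 2*g11*g23 + 2*g12*g13 = 0" "- (a1^2) + 2*a2*g13 + a2^2 + 2*a3*g12 - a3^2 + g11*g22 - g11*g33 - g12^2 + g13^2 - g22*g33 + g23^2 - 1 = 0" "- (2*a2*g23) - 2*a3*g22 + 2*g12*g33 - 2*g13*g23 = 0" "2*a2*g33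 + 2*a3*g23 - 2*g12*g23 + 2*g13*g22 = 0" using A B C by auto
qed


definition Psi :: "real \<Rightarrow> real \<Rightarrow> real \<Rightarrow> real \<Rightarrow> real^3 \<Rightarrow> real^3" where
  "Psi a1 a2 a3 z x = vector [a2 * z * x$1 - a1*x$2 - a3*a1 * z * x$3, a1 * z * x$1 - a2*x$2 - a3*a2 * z * x$3,
      -a3*x$2 + (a1^2 - a2^2) * z * x$3]"

definition Jst :: "real \<Rightarrow> real^3 \<Rightarrow> real^3" where
  "Jst l x = vector [- x$3, l * x$2, x$1]"

lemma Psi_br:
  assumes "a2^2 - a1^2 - a3^2 = 1" "z^2*(1+a3^2) = 1"
  shows "Psi a1 a2 a3 z (sl2_bracket x y) = sl2_bracket (Psi a1 a2 a3 z x) (Psi a1 a2 a3 z y)"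
  unfolding vec_eq_iff forall_3 using assms
  by (simp add: Psi_def sl2_bracket_def; algebra)

lemma Psi_J:
  assumes "a2^2 - a1^2 - a3^2 = 1" "z^2*(1+a3^2) = 1"
  shows "Jg (-t*a1*a1) (t*a1*a2) (-t*a1*a3) (-t*a2*a2) (t*a2*a3) (-t*a3*a3) a1 a2 a3 (Psi a1 a2 a3 z x)
     = Psi a1 a2 a3 z (Jst t x)"
  unfolding vec_eq_iff forall_3 using assms
  by (simp add: Psi_def Jg_def Jst_def; algebra)

lemma Psi_coords:
  assumes "a2^2 - a1^2 - a3^2 = 1" "z^2*(1+a3^2) = 1"
  shows "x$1 = a2 * z * (Psi a1 a2 a3 z x)$1 - a1 * z * (Psi a1 a2 a3 z x)$2"
    "x$2 = a1*(Psi a1 a2 a3 z x)$1 - a2*(Psi a1 a2 a3 z x)$2 + a3*(Psi a1 a2 a3 z x)$3"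
    "x$3 = -a3*a1 * z * (Psi a1 a2 a3 z x)$1 + a3*a2 * z * (Psi a1 a2 a3 z x)$2 + (a1^2-a2^2) * z * (Psi a1 a2 a3 z x)$3"
  using assms by (simp add: Psi_def; algebra)+

lemma Psi_linear: "linear (Psi a1 a2 a3 z)"
  by (rule linearI) (simp_all add: Psi_def vec_eq_iff forall_3 algebra_simps)



lemma lin3:
  assumes "linear (J :: real^3 \<Rightarrow> real^3)"
  shows "J x $ i = J (axis 1 1) $ i * x$1 + J (axis 2 1) $ i * x$2 + J (axis 3 1) $ i * x$3"
proof -
  have "J x = matrix J *v x" by (simp add: matrix_works assms)
  then show ?thesis by (simp add: matrix_vector_mult_def matrix_def sum_3)
qed

lemma surjtest: fixes f :: "real^3 \<Rightarrow> real^3" assumes "linear f" "inj f" shows "surj f"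
  using assms linear_injective_imp_surjective by blast

lemma invlin: fixes f :: "real^3 \<Rightarrow> real^3" assumes "linear f" "inj f" shows "linear (inv f)"
  using assms inj_linear_imp_inv_linear by blast


lemma J_Jg:
  assumes "linear J"
  shows "\<exists>g11 g12 g13 g22 g23 g33 a1 a2 a3. J = Jg g11 g12 g13 g22 g23 g33 a1 a2 a3"
proof -
  define m where "m i j = J (axis j 1) $ i" for i j :: 3
  have "J = Jg (m 1 1) ((m 1 2 - m 2 1)/2) ((m 1 3 + m 3 1)/2) (- m 2 2) ((m 3 2 - m 2 3)/2) (m 3 3)
            ((m 2 3 + m 3 2)/2) ((m 1 3 - m 3 1)/2) (- (m 1 2 + m 2 1)/2)"
  proof
    fix x
    have Jx: "J x $ i = m i 1 * x$1 + m i 2 * x$2 + m i 3 * x$3" for i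
      using lin3[OF assms, of x i] unfolding m_def by simp
    show "J x = Jg (m 1 1) ((m 1 2 - m 2 1)/2) ((m 1 3 + m 3 1)/2) (- m 2 2) ((m 3 2 - m 2 3)/2) (m 3 3)
            ((m 2 3 + m 3 2)/2) ((m 1 3 - m 3 1)/2) (- (m 1 2 + m 2 1)/2) x"
      unfolding vec_eq_iff forall_3 by (simp add: Jx Jg_def field_simps)
  qed
  then show ?thesis by blast
qed

lemma z_lemma: "(1/sqrt(1+a3^2))^2*(1+a3^2) = (1::real)"
proof -
  have "1 + a3^2 > 0" by (simp add: add_pos_nonneg)
  then show ?thesis by (simp add: power_divide)
qed

lemma transfer:
  assumes aut: "sl2_aut \<Phi>" and L: "L = \<Phi> \<circ> J \<circ> inv \<Phi>" and zt: "zero_torsion L"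
  shows "zero_torsion J"
proof -
  have lin: "linear \<Phi>" and bij: "bij \<Phi>" and br: "\<And>X Y. \<Phi> (sl2_bracket X Y) = sl2_bracket (\<Phi> X) (\<Phi> Y)"
    using aut unfolding sl2_aut_def by auto
  have inj: "inj \<Phi>" using bij bij_is_inj by auto
  have PJ: "\<And>x. \<Phi> (J x) = L (\<Phi> x)" using L inv_f_f[OF inj] by simp
  show ?thesis unfolding zero_torsion_def
  proof (intro allI)
    fix X Y
    let ?T = "sl2_bracket (J X) (J Y) - sl2_bracket X Y - J (sl2_bracket (J X) Y) - J (sl2_bracket X (J Y))"
    have "\<Phi> ?T = sl2_bracket (L (\<Phi> X)) (L (\<Phi> Y)) - sl2_bracket (\<Phi> X) (\<Phi> Y)
        - L (sl2_bracket (L (\<Phi> X)) (\<Phi> Y)) - L (sl2_bracket (\<Phi> X) (L (\<Phi> Y)))"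
      by (simp add: linear_diff[OF lin] br PJ)
    also have "\<dots> = 0" using zt unfolding zero_torsion_def by blast
    finally have "\<Phi> ?T = \<Phi> 0" using linear_0[OF lin] by simp
    then show "?T = 0" using inj by (simp add: inj_eq)
  qed
qed

lemma Jst_linear: "linear (Jst l)"
  by (rule linearI) (simp_all add: Jst_def vec_eq_iff forall_3 algebra_simps)

lemma Jst_zt: "zero_torsion (Jst l)"
  unfolding zero_torsion_def vec_eq_iff forall_3
  by (simp add: Jst_def sl2_bracket_def algebra_simps)

lemma Jst_hm: "has_matrix_in_basis (Jst l) Ybasis (Jstar l)"
  unfolding has_matrix_in_basis_def forall_3 sum_3 Ybasis_def Jstar_def vec_eq_iff
  by (simp add: Jst_def axis_def)

lemma Jst_unique:
  assumes "linear L" "has_matrix_in_basis L Ybasis (Jstar l)"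
  shows "L = Jst l"
proof
  fix x
  have h: "L (axis 1 1) = vector [0,0,1]" "L (axis 2 1) = vector [0,l,0]" "L (axis 3 1) = vector [-1,0,0]"
    using assms(2) unfolding has_matrix_in_basis_def forall_3 sum_3 Ybasis_def Jstar_def
    by (simp_all add: vec_eq_iff forall_3 axis_def)
  show "L x = Jst l x" unfolding vec_eq_iff forall_3
    by (simp add: lin3[OF assms(1)] h Jst_def)
qed

lemma HX_hm: "has_matrix_in_basis (Jst (2*a)) HXbasis (Jalpha a)"
  unfolding has_matrix_in_basis_def forall_3 sum_3 HXbasis_def Jalpha_def vec_eq_iff
  by (simp add: Jst_def)

lemma HX_unique:
  assumes lin: "linear L" and hm: "has_matrix_in_basis L HXbasis (Jalpha a)"
  shows "L = Jst (2*a)"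
proof
  fix x
  have h0: "L (HXbasis 1) = vector [0,0,2]" "L (HXbasis 2) = vector [-1, 2*a, 0]" "L (HXbasis 3) = vector [-1,-2*a,0]"
    using hm unfolding has_matrix_in_basis_def forall_3 sum_3 HXbasis_def Jalpha_def
    by (simp_all add: vec_eq_iff forall_3)
  have e1: "axis 1 1 = (1/2) *\<^sub>R HXbasis 1" and e2: "axis 2 1 = (1/2) *\<^sub>R (HXbasis 2 - HXbasis 3)"
    and e3: "axis 3 1 = (1/2) *\<^sub>R (HXbasis 2 + HXbasis 3)"
    by (simp_all add: HXbasis_def vec_eq_iff forall_3 axis_def)
  have h: "L (axis 1 1) = vector [0,0,1]" "L (axis 2 1) = vector [0,2*a,0]" "L (axis 3 1) = vector [-1,0,0]"
    unfolding e1 e2 e3 by (simp_all add: linear_scale[OF lin] linear_diff[OF lin] linear_add[OF lin] h0 vec_eq_iff forall_3)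
  show "L x = Jst (2*a) x" unfolding vec_eq_iff forall_3
    by (simp add: lin3[OF lin] h Jst_def)
qed

lemma det_Jst: "det (matrix (Jst l)) = l"
  by (simp add: det_3 matrix_def Jst_def axis_def)

lemma det_equiv:
  assumes lin: "linear L" and eq: "sl2_equiv L L'"
  shows "det (matrix L') = det (matrix L)"
proof -
  obtain \<Phi> where aut: "sl2_aut \<Phi>" and L': "L' = \<Phi> \<circ> L \<circ> inv \<Phi>" using eq unfolding sl2_equiv_def by blast
  have linP: "linear \<Phi>" and bij: "bij \<Phi>" using aut unfolding sl2_aut_def by auto
  have inj: "inj \<Phi>" using bij bij_is_inj by auto
  have linI: "linear (inv \<Phi>)" using inj_linear_imp_inv_linear linP inj by blast
  have lin2: "linear (L \<circ> inv \<Phi>)" using linear_compose[OF linI lin] .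
  have c1: "matrix (L \<circ> inv \<Phi>) = matrix L ** matrix (inv \<Phi>)" using matrix_compose[OF linI lin] .
  have "L' = \<Phi> \<circ> (L \<circ> inv \<Phi>)" unfolding L' by (simp add: comp_assoc)
  then have "matrix L' = matrix \<Phi> ** (matrix L ** matrix (inv \<Phi>))"
    using matrix_compose[OF lin2 linP] c1 by simp
  then have "det (matrix L') = det (matrix \<Phi>) * (det (matrix L) * det (matrix (inv \<Phi>)))"
    by (simp add: det_mul)
  moreover have "\<Phi> \<circ> inv \<Phi> = id" using bij_is_surj[OF bij] surj_iff by blast
  then have "matrix \<Phi> ** matrix (inv \<Phi>) = matrix id"
    using matrix_compose[OF linI linP] by simp
  then have "det (matrix \<Phi>) * det (matrix (inv \<Phi>)) = 1"
    by (metis det_mul matrix_id)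
  ultimately show ?thesis by (simp add: algebra_simps)
qed



lemma key:
  fixes g11 g12 g13 g22 g23 g33 a1 a2 a3 :: real
  assumes E1: "- (2*a1*g12) - 2*a2*g11 - 2*g12*g23 + 2*g13*g22 = 0"
    and E2: "2*a1*g22 + 2*a2*g12 + 2*g11*g23 - 2*g12*g13 = 0"
    and E3: "- (2*a1*g23) - a1^2 - 2*a2*g13 + a2^2 - a3^2 - g11*g22 - g11*g33 + g12^2 + g13^2 + g22*g33 - g23^2 - 1 = 0"
    and E4: "- (2*a1*g13) + 2*a3*g11 - 2*g12*g33 + 2*g13*g23 = 0"
    and E5: "2*a1*g23 - a1^2 + a2^2 - 2*a3*g12 - a3^2 + g11*g22 + g11*g33 - g12^2 - g13^2 + g22*g33 - g23^2 - 1 = 0"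
    and E6: "- (2*a1*g33) + 2*a3*g13 - 2*g11*g23 + 2*g12*g13 = 0"
    and E7: "- (a1^2) + 2*a2*g13 + a2^2 + 2*a3*g12 - a3^2 + g11*g22 - g11*g33 - g12^2 + g13^2 - g22*g33 + g23^2 - 1 = 0"
    and E8: "- (2*a2*g23) - 2*a3*g22 + 2*g12*g33 - 2*g13*g23 = 0"
    and E9: "2*a2*g33 + 2*a3*g23 - 2*g12*g23 + 2*g13*g22 = 0"
  shows "a2^2 - a1^2 - a3^2 = 1 \<and> g11 = -(g11 - g22 + g33)*a1*a1 \<and> g12 = (g11 - g22 + g33)*a1*a2 \<and> g13 = -(g11 - g22 + g33)*a1*a3 \<and> g22 = -(g11 - g22 + g33)*a2*a2 \<and> g23 = (g11 - g22 + g33)*a2*a3 \<and> g33 = -(g11 - g22 + g33)*a3*a3"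
proof -
  note E = E1 E2 E3 E4 E5 E6 E7 E8 E9
  have P1: "- (a1*g12) - a2*g11 - a2*g33 - a3*g23 = 0 \<and> - (a1*g22) + a1*g33 - a2*g12 - a3*g13 = 0 \<and> a1*g12 + a2*g11 + a2*g33 + a3*g23 = 0 \<and> a1*g13 + a2*g23 - a3*g11 + a3*g22 = 0" using E by algebra
  have P2: "- (2*a1^2) + a2*g13 + 2*a2^2 + a3*g12 - 2*a3^2 + g11*g22 - g11*g33 - g12^2 + g13^2 - 2 = 0 \<and> - (a1*g13) + a3*g11 - g12*g33 + g13*g23 = 0 \<and> - (a1*g12) - a2*g11 - g12*g23 + g13*g22 = 0 \<and> - (a2*g23) - a3*g22 + g12*g33 - g13*g23 = 0 \<and> a1*g23 - 2*a1^2 + 2*a2^2 - a3*g12 - 2*a3^2 + g11*g22 - g12^2 + g22*g33 - g23^2 - 2 = 0 \<and> a1*g22 + a2*g12 + g11*g23 - g12*g13 = 0 \<and> a2*g33 + a3*g23 - g12*g23 + g13*g22 = 0 \<and> - (a1*g33) + a3*g13 - g11*g23 + g12*g13 = 0 \<and> - (a1*g23) - 2*a1^2 - a2*g13 + 2*a2^2 - 2*a3^2 - g11*g33 + g13^2 + g22*g33 - g23^2 - 2 = 0" using E by algebra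
  have trS2: "- (6*a1^2) + 6*a2^2 - 6*a3^2 + 2*g11*g22 - 2*g11*g33 - 2*g12^2 + 2*g13^2 + 2*g22*g33 - 2*g23^2 - 6 = 0" using E by algebra
  have P4: "- (a1*a2*g12) - a1*a3*g13 - a2*g11*g13 + a2*g13*g22 - a2*g13*g33 - a2^2*g11 - a3*g11*g12 + a3*g12*g22 - a3*g12*g33 + a3^2*g11 = 0 \<and> a1*a2*g11 + a1*g11*g13 - a1*g13*g22 + a1*g13*g33 + a1^2*g12 + a2*a3*g13 + a3*g11*g22 - a3*g11*g33 - a3*g11^2 + a3^2*g12 = 0 \<and> - (a1*a3*g11) + a1*g11*g12 - a1*g12*g22 + a1*g12*g33 + a1^2*g13 - a2*a3*g12 - a2*g11*g22 + a2*g11*g33 + a2*g11^2 - a2^2*g13 = 0 \<and> a1*a2*g22 + a1*a3*g23 + a2*g11*g23 - a2*g22*g23 + a2*g23*g33 + a2^2*g12 + a3*g11*g22 + a3*g22*g33 - a3*g22^2 - a3^2*g12 = 0 \<and> - (a1*a2*g12) - a1*g11*g23 + a1*g22*g23 - a1*g23*g33 - a1^2*g22 - a2*a3*g23 + a3*g11*g12 - a3*g12*g22 + a3*g12*g33 - a3^2*g22 = 0 \<and> a1*a3*g12 - a1*g11*g22 - a1*g22*g33 + a1*g22^2 - a1^2*g23 + a2*a3*g22 - a2*g11*g12 + a2*g12*g22 - a2*g12*g33 + a2^2*g23 = 0 \<and> - (a1*a2*g23) - a1*a3*g33 - a2*g11*g33 + a2*g22*g33 - a2*g33^2 - a2^2*g13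 - a3*g11*g23 + a3*g22*g23 - a3*g23*g33 + a3^2*g13 = 0 \<and> a1*a2*g13 + a1*g11*g33 - a1*g22*g33 + a1*g33^2 + a1^2*g23 + a2*a3*g33 - a3*g11*g13 + a3*g13*g22 - a3*g13*g33 + a3^2*g23 = 0 \<and> - (a1*a3*g13) + a1*g11*g23 - a1*g22*g23 + a1*g23*g33 + a1^2*g33 - a2*a3*g23 + a2*g11*g13 - a2*g13*g22 + a2*g13*g33 - a2^2*g33 = 0" using P1 P2 by algebra
  have E3f: "- (a2*g11*g13) + a2*g12*g23 - a2*g13*g33 - a3*g11*g12 + a3*g12*g22 - a3*g13*g23 = 0 \<and> a1*g11*g13 - a1*g12*g23 + a1*g13*g33 + 2*a1^2*a3 - 2*a2^2*a3 - a3*g11^2 + a3*g12^2 - a3*g13^2 + 2*a3^3 + 2*a3 = 0 \<and> a1*g11*g12 - a1*g12*g22 + a1*g13*g23 - 2*a1^2*a2 - 2*a2*a3^2 + a2*g11^2 - a2*g12^2 + a2*g13^2 + 2*a2^3 - 2*a2 = 0 \<and> 2*a1^2*a3 + a2*g12*g13 - a2*g22*g23 + a2*g23*g33 - 2*a2^2*a3 + a3*g12^2 - a3*g22^2 + a3*g23^2 + 2*a3^3 + 2*a3 = 0 \<and> - (a1*g12*g13) + a1*g22*g23 - a1*g23*g33 + a3*g11*g12 - a3*g12*g22 + a3*g13*g23 = 0 \<and> 2*a1*a2^2 - 2*a1*a3^2 - a1*g12^2 + a1*g22^2 - a1*g23^2 - 2*a1^3 - a2*g11*g12 + a2*g12*g22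 - a2*g13*g23 - 2*a1 = 0 \<and> 2*a1^2*a2 + 2*a2*a3^2 - a2*g13^2 + a2*g23^2 - a2*g33^2 - 2*a2^3 - a3*g12*g13 + a3*g22*g23 - a3*g23*g33 + 2*a2 = 0 \<and> 2*a1*a2^2 - 2*a1*a3^2 + a1*g13^2 - a1*g23^2 + a1*g33^2 - 2*a1^3 - a3*g11*g13 + a3*g12*g23 - a3*g13*g33 - 2*a1 = 0 \<and> a1*g12*g13 - a1*g22*g23 + a1*g23*g33 + a2*g11*g13 - a2*g12*g23 + a2*g13*g33 = 0" using P1 P2 by algebra
  define t where "t = g11 - g22 + g33"
  define q where "q = a1^2 - a2^2 + a3^2"
  define k where "k = -2*(q+1)"
  show ?thesis
  proof (cases "a1 = 0 \<and> a2 = 0 \<and> a3 = 0")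
    case True
    then have z: "a1 = 0" "a2 = 0" "a3 = 0" by auto
    have "g12 = 0" "g13 = 0" "g23 = 0" "g22 = - g11" "g33 = g11" using P2 trS2 z by algebra+
    then have "g11^2 = -1" using P2 z by algebra
    moreover have "g11^2 \<ge> 0" by simp
    ultimately show ?thesis by linarith
  next
    case False
    define n2 where "n2 = a1^2 + a2^2 + a3^2"
    have n2pos: "n2 > 0"
    proof -
      have "0 \<le> a1^2" "0 \<le> a2^2" "0 \<le> a3^2" by simp_all
      moreover have "a1^2 > 0 \<or> a2^2 > 0 \<or> a3^2 > 0" using False by auto
      ultimately show ?thesis unfolding n2_def by linarith
    qed
    define rho where "rho = 2*a1*a3*g13 + a1^2*g11 - a2^2*g22 + a3^2*g33"
    have F1: "(a1*g11 + a2*g12 + a3*g13)*n2 = a1*rho" "(- (a1*g12) - a2*g22 - a3*g23)*n2 = a2*rho" "(a1*g13 + a2*g23 + a3*g33)*n2 = a3*rho" using P1 unfolding n2_def rho_def by algebra+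
    define mu where "mu = rho/n2"
    have Sa: "a1*g11 + a2*g12 + a3*g13 = mu*a1" "- (a1*g12) - a2*g22 - a3*g23 = mu*a2" "a1*g13 + a2*g23 + a3*g33 = mu*a3" using F1 n2pos unfolding mu_def by (auto simp: field_simps)
    have B2a: "(mu^2 - t*mu + k)*a1 = 0" "(mu^2 - t*mu + k)*a2 = 0" "(mu^2 - t*mu + k)*a3 = 0" using P2 Sa unfolding t_def k_def q_def by algebra+
    have B2: "mu^2 - t*mu + k = 0"
    proof -
      have "(mu^2 - t*mu + k)*n2 = 0" using B2a unfolding n2_def by algebra
      then show ?thesis using n2pos by simp
    qed
    have B3a: "q*(g11^2 - 2*g12^2 + 2*g13^2 + g22^2 - 2*g23^2 + g33^2 + 3*k) - (mu^2+k)*q = 0" using E3f Sa unfolding q_def k_def by algebra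
    have B3: "q*t*(t-mu) = 0" using B3a B2 trS2 unfolding t_def q_def k_def by algebra
    have B4: "(q - t^2)*(q*(g11) - mu*a1*(a1)) = 0" "(q - t^2)*(q*(g12) - mu*a1*(- (a2))) = 0" "(q - t^2)*(q*(g13) - mu*a1*(a3)) = 0" "(q - t^2)*(q*(- (g12)) - mu*a2*(a1)) = 0" "(q - t^2)*(q*(- (g22)) - mu*a2*(- (a2))) = 0" "(q - t^2)*(q*(- (g23)) - mu*a2*(a3)) = 0" "(q - t^2)*(q*(g13) - mu*a3*(a1)) = 0" "(q - t^2)*(q*(g23) - mu*a3*(- (a2))) = 0" "(q - t^2)*(q*(g33) - mu*a3*(a3)) = 0" using P4 Sa unfolding t_def q_def by algebra+
    have Z: "mu = 0" if "mu*a1*a1 = 0" "mu*a2*a2 = 0" "mu*a3*a3 = 0"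
    proof -
      have "mu*n2 = 0" using that unfolding n2_def by algebra
      then show ?thesis using n2pos by simp
    qed
    have mu0: "mu = 0 \<Longrightarrow> q = -1" using B2 unfolding k_def by simp
    have Rq: "q*(g11) = mu*a1*(a1)" "q*(g12) = mu*a1*(- (a2))" "q*(g13) = mu*a1*(a3)" "q*(- (g12)) = mu*a2*(a1)" "q*(- (g22)) = mu*a2*(- (a2))" "q*(- (g23)) = mu*a2*(a3)" "q*(g13) = mu*a3*(a1)" "q*(g23) = mu*a3*(- (a2))" "q*(g33) = mu*a3*(a3)" if "q \<noteq> t^2"
    proof -
      have nz: "q - t^2 \<noteq> 0" using that by simp
      show "q*(g11) = mu*a1*(a1)" using B4(1) nz by (metis eq_iff_diff_eq_0 mult_eq_0_iff)
      show "q*(g12) = mu*a1*(- (a2))" using B4(2) nz by (metis eq_iff_diff_eq_0 mult_eq_0_iff)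
      show "q*(g13) = mu*a1*(a3)" using B4(3) nz by (metis eq_iff_diff_eq_0 mult_eq_0_iff)
      show "q*(- (g12)) = mu*a2*(a1)" using B4(4) nz by (metis eq_iff_diff_eq_0 mult_eq_0_iff)
      show "q*(- (g22)) = mu*a2*(- (a2))" using B4(5) nz by (metis eq_iff_diff_eq_0 mult_eq_0_iff)
      show "q*(- (g23)) = mu*a2*(a3)" using B4(6) nz by (metis eq_iff_diff_eq_0 mult_eq_0_iff)
      show "q*(g13) = mu*a3*(a1)" using B4(7) nz by (metis eq_iff_diff_eq_0 mult_eq_0_iff)
      show "q*(g23) = mu*a3*(- (a2))" using B4(8) nz by (metis eq_iff_diff_eq_0 mult_eq_0_iff)
      show "q*(g33) = mu*a3*(a3)" using B4(9) nz by (metis eq_iff_diff_eq_0 mult_eq_0_iff)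
    qed
    have qm1: "q = -1"
    proof (cases "q = t^2")
      case True
      show ?thesis
      proof (cases "t = 0")
        case True
        with \<open>q = t^2\<close> have "q = 0" by simp
        have "mu*a1*a1 = 0" "mu*a2*a2 = 0" "mu*a3*a3 = 0" using P4 Sa \<open>q = 0\<close> True unfolding q_def t_def by algebra+
        then show ?thesis using Z mu0 by blast
      next
        case False
        then have "q \<noteq> 0" using \<open>q = t^2\<close> by simp
        then have "mu = t" using B3 False by simp
        then show ?thesis using B2 unfolding k_def by (simp add: power2_eq_square)
      qed
    next
      case False
      note R = Rq[OF False]
      have tr: "q*t = mu*q" using R unfolding t_def q_def by algebra
      show ?thesis
      proof (cases "q = 0")
        case True
        have "mu*a1*a1 = 0" "mu*a2*a2 = 0" "mu*a3*a3 = 0" using R True by algebra+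
        then show ?thesis using Z mu0 by blast
      next
        case False
        then have "mu = t" using tr by simp
        then show ?thesis using B2 unfolding k_def by (simp add: power2_eq_square)
      qed
    qed
    have "q \<noteq> t^2" using qm1 by (metis zero_le_power2 neg_0_le_iff_le not_one_le_zero)
    note R = Rq[OF this]
    have tr: "q*t = mu*q" using R unfolding t_def q_def by algebra
    then have "mu = t" using qm1 by simp
    then show ?thesis using R qm1 unfolding t_def q_def by algebra
  qed
qed




lemma Jstructure:
  assumes lin: "linear J" and zt: "zero_torsion J"
  shows "\<exists>t \<Phi>. sl2_aut \<Phi> \<and> Jst t = \<Phi> \<circ> J \<circ> inv \<Phi>"
proof -
  obtain g11 g12 g13 g22 g23 g33 a1 a2 a3 where J: "J = Jg g11 g12 g13 g22 g23 g33 a1 a2 a3"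
    using J_Jg[OF lin] by blast
  have zt': "zero_torsion (Jg g11 g12 g13 g22 g23 g33 a1 a2 a3)" using zt J by simp
  note E = tors_E[OF zt']
  have K: "a2^2 - a1^2 - a3^2 = 1 \<and> g11 = -(g11 - g22 + g33)*a1*a1 \<and> g12 = (g11 - g22 + g33)*a1*a2 \<and> g13 = -(g11 - g22 + g33)*a1*a3 \<and> g22 = -(g11 - g22 + g33)*a2*a2 \<and> g23 = (g11 - g22 + g33)*a2*a3 \<and> g33 = -(g11 - g22 + g33)*a3*a3"
    using key[OF E] .
  define t where "t = g11 - g22 + g33"
  have c: "a2^2 - a1^2 - a3^2 = 1" using K by blast
  have gs: "g11 = -t*a1*a1" "g12 = t*a1*a2" "g13 = -t*a1*a3" "g22 = -t*a2*a2" "g23 = t*a2*a3" "g33 = -t*a3*a3"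
    using K unfolding t_def by blast+
  have J2: "J = Jg (-t*a1*a1) (t*a1*a2) (-t*a1*a3) (-t*a2*a2) (t*a2*a3) (-t*a3*a3) a1 a2 a3"
    unfolding J by (simp only: gs)
  define z where "z = 1/sqrt(1+a3^2)"
  have z: "z^2*(1+a3^2) = 1" unfolding z_def by (rule z_lemma)
  define \<Psi> where "\<Psi> = Psi a1 a2 a3 z"
  have linP: "linear \<Psi>" unfolding \<Psi>_def by (rule Psi_linear)
  have brP: "\<And>x y. \<Psi> (sl2_bracket x y) = sl2_bracket (\<Psi> x) (\<Psi> y)"
    unfolding \<Psi>_def using Psi_br[OF c z] by blast
  have JP: "\<And>x. J (\<Psi> x) = \<Psi> (Jst t x)"
    unfolding \<Psi>_def J2 using Psi_J[OF c z] by blast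
  have injP: "inj \<Psi>"
  proof (rule injI)
    fix x y assume eq: "\<Psi> x = \<Psi> y"
    have "x$1 = y$1" "x$2 = y$2" "x$3 = y$3"
      using Psi_coords[OF c z, of x] Psi_coords[OF c z, of y] eq unfolding \<Psi>_def by simp_all
    then show "x = y" by (simp add: vec_eq_iff forall_3)
  qed
  have surjP: "surj \<Psi>" using linear_injective_imp_surjective linP injP by blast
  have bijP: "bij \<Psi>" using injP surjP by (simp add: bij_def)
  define \<Phi> where "\<Phi> = inv \<Psi>"
  have aut: "sl2_aut \<Phi>"
    unfolding sl2_aut_def
  proof (intro conjI allI)
    show "linear \<Phi>" unfolding \<Phi>_def using inj_linear_imp_inv_linear linP injP by blast
    show "bij \<Phi>" unfolding \<Phi>_def using bij_imp_bij_inv bijP by blast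
    fix X Y
    obtain x where x: "X = \<Psi> x" using surjP by (metis surjD)
    obtain y where y: "Y = \<Psi> y" using surjP by (metis surjD)
    show "\<Phi> (sl2_bracket X Y) = sl2_bracket (\<Phi> X) (\<Phi> Y)"
      unfolding x y \<Phi>_def brP[symmetric] using inv_f_f[OF injP] by simp
  qed
  have "inv \<Phi> = \<Psi>" unfolding \<Phi>_def using inv_inv_eq[OF bijP] .
  then have "Jst t = \<Phi> \<circ> J \<circ> inv \<Phi>"
    by (simp add: fun_eq_iff JP \<Phi>_def inv_f_f[OF injP])
  then show ?thesis using aut by blast
qed



lemma part1:
  assumes lin: "linear J"
  shows "zero_torsion J \<longleftrightarrow>
            (\<exists>l L. linear L \<and> has_matrix_in_basis L Ybasis (Jstar l) \<and> sl2_equiv J L)"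
proof
  assume "zero_torsion J"
  then obtain t \<Phi> where "sl2_aut \<Phi>" "Jst t = \<Phi> \<circ> J \<circ> inv \<Phi>" using Jstructure lin by blast
  then have "sl2_equiv J (Jst t)" unfolding sl2_equiv_def by blast
  then show "\<exists>l L. linear L \<and> has_matrix_in_basis L Ybasis (Jstar l) \<and> sl2_equiv J L"
    using Jst_linear Jst_hm by blast
next
  assume "\<exists>l L. linear L \<and> has_matrix_in_basis L Ybasis (Jstar l) \<and> sl2_equiv J L"
  then obtain l L where L: "linear L" "has_matrix_in_basis L Ybasis (Jstar l)" "sl2_equiv J L" by blast
  have "L = Jst l" using Jst_unique L by blast
  then have zt: "zero_torsion L" using Jst_zt by simp
  obtain \<Phi> where "sl2_aut \<Phi>" "L = \<Phi> \<circ> J \<circ> inv \<Phi>" using L(3) unfolding sl2_equiv_def by blast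
  then show "zero_torsion J" using transfer zt by blast
qed

lemma part2:
  "\<forall>l m L L'. linear L \<and> has_matrix_in_basis L Ybasis (Jstar l) \<and>
            linear L' \<and> has_matrix_in_basis L' Ybasis (Jstar m) \<and> l \<noteq> m
            \<longrightarrow> \<not> sl2_equiv L L'"
proof (intro allI impI notI)
  fix l m L L'
  assume h: "linear L \<and> has_matrix_in_basis L Ybasis (Jstar l) \<and>
            linear L' \<and> has_matrix_in_basis L' Ybasis (Jstar m) \<and> l \<noteq> m" and eq: "sl2_equiv L L'"
  have "L = Jst l" "L' = Jst m" using Jst_unique h by blast+
  then have "m = l" using det_equiv[OF _ eq] h det_Jst by metis
  then show False using h by simp
qed

theorem lemma1:
  fixes J :: "real^3 \<Rightarrow> real^3"
  assumes "linear J"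
  shows "(zero_torsion J \<longleftrightarrow>
            (\<exists>l L. linear L \<and> has_matrix_in_basis L Ybasis (Jstar l) \<and> sl2_equiv J L))
       \<and> (\<forall>l m L L'. linear L \<and> has_matrix_in_basis L Ybasis (Jstar l) \<and>
            linear L' \<and> has_matrix_in_basis L' Ybasis (Jstar m) \<and> l \<noteq> m
            \<longrightarrow> \<not> sl2_equiv L L')
       \<and> (zero_torsion J \<longleftrightarrow>
            (\<exists>a L. linear L \<and> has_matrix_in_basis L HXbasis (Jalpha a) \<and> sl2_equiv J L))
       \<and> (\<forall>a b L L'. linear L \<and> has_matrix_in_basis L HXbasis (Jalpha a) \<and>
            linear L' \<and> has_matrix_in_basis L' HXbasis (Jalpha b) \<and> a \<noteq> b
            \<longrightarrow> \<not> sl2_equiv L L')"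
proof (intro conjI)
  show p1: "zero_torsion J \<longleftrightarrow>
            (\<exists>l L. linear L \<and> has_matrix_in_basis L Ybasis (Jstar l) \<and> sl2_equiv J L)"
    using part1[OF assms] .
  show "\<forall>l m L L'. linear L \<and> has_matrix_in_basis L Ybasis (Jstar l) \<and>
            linear L' \<and> has_matrix_in_basis L' Ybasis (Jstar m) \<and> l \<noteq> m
            \<longrightarrow> \<not> sl2_equiv L L'" using part2 .
  show "zero_torsion J \<longleftrightarrow>
            (\<exists>a L. linear L \<and> has_matrix_in_basis L HXbasis (Jalpha a) \<and> sl2_equiv J L)"
  proof
    assume "zero_torsion J"
    then obtain l L where L: "linear L" "has_matrix_in_basis L Ybasis (Jstar l)" "sl2_equiv J L"
      using p1 by blast
    have "L = Jst (2*(l/2))" using Jst_unique L by simp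
    then have "has_matrix_in_basis L HXbasis (Jalpha (l/2))" using HX_hm[of "l/2"] by simp
    then show "\<exists>a L. linear L \<and> has_matrix_in_basis L HXbasis (Jalpha a) \<and> sl2_equiv J L"
      using L by blast
  next
    assume "\<exists>a L. linear L \<and> has_matrix_in_basis L HXbasis (Jalpha a) \<and> sl2_equiv J L"
    then obtain a L where L: "linear L" "has_matrix_in_basis L HXbasis (Jalpha a)" "sl2_equiv J L" by blast
    have "L = Jst (2*a)" using HX_unique L by blast
    then have "has_matrix_in_basis L Ybasis (Jstar (2*a))" using Jst_hm by simp
    then show "zero_torsion J" using p1 L by blast
  qed
  show "\<forall>a b L L'. linear L \<and> has_matrix_in_basis L HXbasis (Jalpha a) \<and>
            linear L' \<and> has_matrix_in_basis L' HXbasis (Jalpha b) \<and> a \<noteq> b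
            \<longrightarrow> \<not> sl2_equiv L L'"
  proof (intro allI impI notI)
    fix a b L L'
    assume h: "linear L \<and> has_matrix_in_basis L HXbasis (Jalpha a) \<and>
            linear L' \<and> has_matrix_in_basis L' HXbasis (Jalpha b) \<and> a \<noteq> b" and eq: "sl2_equiv L L'"
    have "L = Jst (2*a)" "L' = Jst (2*b)" using HX_unique h by blast+
    then have "2*b = 2*a" using det_equiv[OF _ eq] h det_Jst by metis
    then show False using h by simp
  qed
qed


end
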